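(* Let $(M,d)$ be a metric space, $\mathsf{P}\subseteq M$ a set of $n$ points, $1\le\ell\le k\le n$ integers with $m=\lfloor k/\ell\rfloor\ge2$. Let $Q=\{q_1,\dots,q_m\}$ be the output of Gonzalez's algorithm on $\mathsf{P}$ with $m$ centers, let $C\subseteq\mathsf{P}$ with $|C|=k$ and $C\supseteq\bigcup_{i=1}^m N_{\mathsf{P}}(q_i,\ell)$, let $r_{\mathrm{alg}}=\max_{p\in\mathsf{P}} d_C(p,\ell)$, and let $C^*\subseteq\mathsf{P}$, $|C^*|=k$, be an optimal fault-tolerant $k$-center solution with cost $r_{\mathrm{opt}}=\max_{p\in\mathsf{P}}d_{C^*}(p,\ell)$. If $r_{\mathrm{alg}}>3r_{\mathrm{opt}}$, then for all $1\le i\ne j\le m$ the balls $B(q_i,r_{\mathrm{opt}})$ and $B(q_j,r_{\mathrm{opt}})$ are disjoint, and each ball $B(q_i,r_{\mathrm{opt}})$ contains at least $\ell$ points of $C^*$.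
   Context: Gonzalez's algorithm with $m$ centers: $q_1\in\mathsf{P}$ is arbitrary, and for $i=2,\dots,m$, $q_i$ is a point of $\mathsf{P}$ maximizing $d(p,\{q_1,\dots,q_{i-1}\})$ over $p\in\mathsf{P}$. $B(q,x)$ is the closed ball of radius $x$ centered at $q$. For a finite $S\subseteq M$ and $1\le i\le|S|$, $d_S(p,i)$ is the radius of the smallest closed ball centered at $p$ containing at least $i$ points of $S$; nearest neighbors are ordered lexicographically by $(d(p,s),\text{index of }s)$ and $N_S(p,i)$ is the set of the first $i$ points of $S$ in this order. An optimal fault-tolerant $k$-center solution is a $C^*\subseteq\mathsf{P}$ with $|C^*|=k$ minimizing $\max_{p\in\mathsf{P}}d_{C^*}(p,\ell)$. *)

theory Defs
  imports "HOL-Analysis.Analysis"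
begin

definition dist_set :: "'a::metric_space \<Rightarrow> 'a set \<Rightarrow> real" where
  "dist_set p S = Min ((\<lambda>s. dist p s) ` S)"

definition gonzalez :: "'a::metric_space set \<Rightarrow> nat \<Rightarrow> (nat \<Rightarrow> 'a) \<Rightarrow> bool" where
  "gonzalez P m q \<longleftrightarrow> q 1 \<in> P \<and>
     (\<forall>i \<in> {2..m}. q i \<in> P \<and>
        (\<forall>p \<in> P. dist_set p (q ` {1..<i}) \<le> dist_set (q i) (q ` {1..<i})))"

definition dS :: "'a::metric_space set \<Rightarrow> 'a \<Rightarrow> nat \<Rightarrow> real" where
  "dS S p i = Inf {x. 0 \<le> x \<and> i \<le> card (S \<inter> cball p x)}"

text \<open>N_S(p,i): the first i points of S in the lexicographic order by (d(p,s), index of s).\<close>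
definition NN :: "('a \<Rightarrow> nat) \<Rightarrow> 'a::metric_space set \<Rightarrow> 'a \<Rightarrow> nat \<Rightarrow> 'a set" where
  "NN idx S p i = {s \<in> S. card {t \<in> S. dist p t < dist p s \<or>
                                     (dist p t = dist p s \<and> idx t < idx s)} < i}"

definition ft_cost :: "'a::metric_space set \<Rightarrow> nat \<Rightarrow> 'a set \<Rightarrow> real" where
  "ft_cost P l C = Max ((\<lambda>p. dS C p l) ` P)"

definition optimal_ftkc :: "'a::metric_space set \<Rightarrow> nat \<Rightarrow> nat \<Rightarrow> 'a set \<Rightarrow> bool" where
  "optimal_ftkc P k l Cs \<longleftrightarrow> Cs \<subseteq> P \<and> card Cs = k \<and>
     (\<forall>C'. C' \<subseteq> P \<and> card C' = k \<longrightarrow> ft_cost P l Cs \<le> ft_cost P l C')"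

end

theory Submission
  imports Defs
begin

lemma dS_le:
  assumes "0 \<le> x" "i \<le> card (S \<inter> cball p x)"
  shows "dS S p i \<le> x"
  unfolding dS_def
  by (rule cInf_lower) (use assms in \<open>auto intro!: bdd_belowI[where m=0]\<close>)

lemma dS_attained:
  fixes S :: "'a::metric_space set"
  assumes fin: "finite S" and ik: "i \<le> card S"
  shows "i \<le> card (S \<inter> cball p (dS S p i))"
proof (cases "i = 0")
  case True then show ?thesis by simp
next
  case False
  define X where "X = {x. 0 \<le> x \<and> i \<le> card (S \<inter> cball p x)}"
  have Sne: "S \<noteq> {}" using False ik by auto
  define D where "D = X \<inter> dist p ` S"
  have finD: "finite D" using fin unfolding D_def by auto
  have "Max (dist p ` S) \<in> D"
  proof -
    have "S \<inter> cball p (Max (dist p ` S)) = S"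
      using fin by (auto intro: Max_ge)
    moreover have "0 \<le> Max (dist p ` S)"
      using fin Sne proof -
        obtain s where "s \<in> S" using Sne by auto
        hence "dist p s \<le> Max (dist p ` S)" using fin by (intro Max_ge) auto
        thus ?thesis using zero_le_dist[of p s] by linarith
      qed
    ultimately show ?thesis using ik fin Sne unfolding D_def X_def by auto
  qed
  hence Dne: "D \<noteq> {}" by auto
  define y where "y = Min D"
  have yD: "y \<in> D" using finD Dne y_def by simp
  have "\<forall>x\<in>X. y \<le> x"
  proof
    fix x assume xX: "x \<in> X"
    define T where "T = S \<inter> cball p x"
    have "i \<le> card T" using xX unfolding X_def T_def by auto
    hence Tne: "T \<noteq> {}" using False by auto
    have finT: "finite T" using fin T_def by auto
    define z where "z = Max (dist p ` T)"
    have zin: "z \<in> dist p ` T" using finT Tne z_def by simp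
    have zx: "z \<le> x" using zin unfolding T_def by (auto simp: dist_commute)
    have "S \<inter> cball p z = T"
    proof
      show "S \<inter> cball p z \<subseteq> T" using zx unfolding T_def by (auto simp: dist_commute)
      show "T \<subseteq> S \<inter> cball p z" using finT z_def
        by (auto intro: Max_ge simp: T_def)
    qed
    hence "z \<in> D" using zin \<open>i \<le> card T\<close> unfolding D_def X_def T_def by auto
    hence "y \<le> z" using finD y_def by simp
    thus "y \<le> x" using zx by simp
  qed
  hence "Inf X = y" using yD unfolding D_def by (intro cInf_eq_minimum) auto
  hence "dS S p i = y" unfolding dS_def X_def by simp
  thus ?thesis using yD unfolding D_def X_def by simp
qed

definition lexpred :: "('a \<Rightarrow> nat) \<Rightarrow> 'a::metric_space set \<Rightarrow> 'a \<Rightarrow> 'a \<Rightarrow> 'a set" where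
  "lexpred idx S p s = {t \<in> S. dist p t < dist p s \<or> (dist p t = dist p s \<and> idx t < idx s)}"

lemma card_NN:
  fixes S :: "'a::metric_space set"
  assumes fin: "finite S" and inj: "inj_on idx S" and lS: "l \<le> card S"
  shows "card (NN idx S p l) = l"
proof -
  let ?r = "\<lambda>s. card (lexpred idx S p s)"
  have pre_less: "?r t < ?r s" if "t \<in> S" "s \<in> S"
     "dist p t < dist p s \<or> (dist p t = dist p s \<and> idx t < idx s)" for s t
  proof -
    have "lexpred idx S p t \<subseteq> lexpred idx S p s" using that unfolding lexpred_def by auto
    moreover have "t \<in> lexpred idx S p s" "t \<notin> lexpred idx S p t"
      using that unfolding lexpred_def by auto
    ultimately have "lexpred idx S p t \<subset> lexpred idx S p s" by blast
    moreover have "finite (lexpred idx S p s)" using fin unfolding lexpred_def by auto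
    ultimately show ?thesis by (simp add: psubset_card_mono)
  qed
  have injr: "inj_on ?r S"
  proof (rule inj_onI)
    fix s t assume st: "s \<in> S" "t \<in> S" "?r s = ?r t"
    show "s = t"
    proof (rule ccontr)
      assume "s \<noteq> t"
      hence "idx s \<noteq> idx t" using inj st by (meson inj_onD)
      hence "(dist p t < dist p s \<or> (dist p t = dist p s \<and> idx t < idx s)) \<or>
             (dist p s < dist p t \<or> (dist p s = dist p t \<and> idx s < idx t))" by linarith
      thus False using pre_less[of t s] pre_less[of s t] st by auto
    qed
  qed
  have rng: "?r ` S \<subseteq> {0..<card S}"
  proof
    fix x assume "x \<in> ?r ` S"
    then obtain s where s: "s \<in> S" "x = ?r s" by auto
    have "lexpred idx S p s \<subset> S" using s unfolding lexpred_def by auto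
    hence "?r s < card S" using fin by (simp add: psubset_card_mono)
    thus "x \<in> {0..<card S}" using s by simp
  qed
  have eq: "?r ` S = {0..<card S}"
    using rng card_image[OF injr] by (intro card_subset_eq) auto
  have NNeq: "NN idx S p l = {s \<in> S. ?r s < l}" unfolding NN_def lexpred_def by simp
  have "?r ` {s \<in> S. ?r s < l} = {0..<l}"
  proof
    show "?r ` {s \<in> S. ?r s < l} \<subseteq> {0..<l}" by auto
    show "{0..<l} \<subseteq> ?r ` {s \<in> S. ?r s < l}"
    proof
      fix x assume "x \<in> {0..<l}"
      hence "x \<in> ?r ` S" using eq lS by auto
      thus "x \<in> ?r ` {s \<in> S. ?r s < l}" using \<open>x \<in> {0..<l}\<close> by auto
    qed
  qed
  moreover have "inj_on ?r {s \<in> S. ?r s < l}" using injr by (rule inj_on_subset) auto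
  ultimately show ?thesis using NNeq by (metis card_atLeastLessThan card_image diff_zero)
qed

theorem mainTheorem10:
  fixes P :: "'a::metric_space set" and idx :: "'a \<Rightarrow> nat"
    and n k l m :: nat and q :: "nat \<Rightarrow> 'a" and C Cs :: "'a set"
  assumes "finite P" and "card P = n" and "inj_on idx P"
    and "1 \<le> l" and "l \<le> k" and "k \<le> n"
    and "m = k div l" and "m \<ge> 2"
    and "gonzalez P m q"
    and "C \<subseteq> P" and "card C = k"
    and "(\<Union>i\<in>{1..m}. NN idx P (q i) l) \<subseteq> C"
    and "optimal_ftkc P k l Cs"
    and "ft_cost P l C > 3 * ft_cost P l Cs"
  shows "(\<forall>i\<in>{1..m}. \<forall>j\<in>{1..m}. i \<noteq> j \<longrightarrow>
            cball (q i) (ft_cost P l Cs) \<inter> cball (q j) (ft_cost P l Cs) = {})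
       \<and> (\<forall>i\<in>{1..m}. l \<le> card (Cs \<inter> cball (q i) (ft_cost P l Cs)))"
proof -
  define r where "r = ft_cost P l Cs"
  have finP: "finite P" by fact
  have Pne: "P \<noteq> {}" using assms by auto
  have CsP: "Cs \<subseteq> P" and cardCs: "card Cs = k" using assms(13) unfolding optimal_ftkc_def by auto
  have finCs: "finite Cs" using CsP finP finite_subset by auto
  have finC: "finite C" using assms(10) finP finite_subset by auto
  have qP: "q i \<in> P" if "i \<in> {1..m}" for i
    using assms(9) that unfolding gonzalez_def by (cases "i = 1") auto
  have dSle: "dS Cs p l \<le> r" if "p \<in> P" for p
    unfolding r_def ft_cost_def using finP that by auto
  have Csball: "l \<le> card (Cs \<inter> cball p r)" if "p \<in> P" for p
  proof -
    have "l \<le> card (Cs \<inter> cball p (dS Cs p l))" using dS_attained[OF finCs] assms cardCs by auto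
    also have "\<dots> \<le> card (Cs \<inter> cball p r)"
      using dSle[OF that] finCs by (intro card_mono) auto
    finally show ?thesis .
  qed
  have Cball: "l \<le> card (C \<inter> cball (q i) r)" if "i \<in> {1..m}" for i
  proof -
    have NNsub: "NN idx P (q i) l \<subseteq> cball (q i) r"
    proof
      fix s assume s: "s \<in> NN idx P (q i) l"
      show "s \<in> cball (q i) r"
      proof (rule ccontr)
        assume "s \<notin> cball (q i) r"
        hence "r < dist (q i) s" by simp
        hence "Cs \<inter> cball (q i) r \<subseteq> {t \<in> P. dist (q i) t < dist (q i) s \<or>
             (dist (q i) t = dist (q i) s \<and> idx t < idx s)}" using CsP by auto
        hence "card (Cs \<inter> cball (q i) r) \<le> card {t \<in> P. dist (q i) t < dist (q i) s \<or>
             (dist (q i) t = dist (q i) s \<and> idx t < idx s)}" using finP by (intro card_mono) auto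
        thus False using Csball[OF qP[OF that]] s unfolding NN_def by auto
      qed
    qed
    have "NN idx P (q i) l \<subseteq> C" using assms(12) that by blast
    hence "NN idx P (q i) l \<subseteq> C \<inter> cball (q i) r" using NNsub by auto
    hence "card (NN idx P (q i) l) \<le> card (C \<inter> cball (q i) r)" using finC by (intro card_mono) auto
    moreover have "card (NN idx P (q i) l) = l" using card_NN[OF finP assms(3)] assms by auto
    ultimately show ?thesis by simp
  qed
  obtain ps where ps: "ps \<in> P" "ft_cost P l C = dS C ps l"
    unfolding ft_cost_def using finP Pne
    by (metis (no_types, lifting) Max_in finite_imageI image_iff image_is_empty)
  have far: "2 * r < dist ps (q i)" if "i \<in> {1..m}" for i
  proof -
    have "C \<inter> cball (q i) r \<subseteq> C \<inter> cball ps (dist ps (q i) + r)"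
    proof
      fix x assume "x \<in> C \<inter> cball (q i) r"
      hence xC: "x \<in> C" and xr: "dist (q i) x \<le> r" by auto
      have "dist ps x \<le> dist ps (q i) + dist (q i) x" by (rule dist_triangle)
      hence "dist ps x \<le> dist ps (q i) + r" using xr by linarith
      thus "x \<in> C \<inter> cball ps (dist ps (q i) + r)" using xC by simp
    qed
    hence "l \<le> card (C \<inter> cball ps (dist ps (q i) + r))"
      using Cball[OF that] finC by (meson card_mono finite_Int le_trans)
    moreover have "0 \<le> dist ps (q i) + r"
    proof -
      have "C \<inter> cball (q i) r \<noteq> {}" using Cball[OF that] assms(4) by auto
      hence "0 \<le> r" by auto
      thus ?thesis by simp
    qed
    ultimately have "dS C ps l \<le> dist ps (q i) + r" by (intro dS_le)
    thus ?thesis using ps assms(14) unfolding r_def by linarith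
  qed
  have sep: "2 * r < dist (q i) (q j)" if "i \<in> {1..m}" "j \<in> {1..m}" "i < j" for i j
  proof -
    have j2: "j \<in> {2..m}" using that by auto
    let ?Q = "q ` {1..<j}"
    have Qne: "?Q \<noteq> {}" "finite ?Q" using that by auto
    have "dist_set ps ?Q \<le> dist_set (q j) ?Q"
      using assms(9) j2 ps unfolding gonzalez_def by auto
    obtain k where k: "k \<in> {1..<j}" "dist_set ps ?Q = dist ps (q k)"
    proof -
      have "Min ((\<lambda>s. dist ps s) ` ?Q) \<in> (\<lambda>s. dist ps s) ` ?Q"
        using Qne by (intro Min_in) auto
      then obtain k where "k \<in> {1..<j}" "Min ((\<lambda>s. dist ps s) ` ?Q) = dist ps (q k)" by auto
      thus ?thesis using that unfolding dist_set_def by blast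
    qed
    have "dist_set (q j) ?Q \<le> dist (q j) (q i)"
      unfolding dist_set_def using Qne that by (intro Min_le) auto
    moreover have "2 * r < dist ps (q k)" using far k that by auto
    ultimately show ?thesis using k \<open>dist_set ps ?Q \<le> dist_set (q j) ?Q\<close>
      by (simp add: dist_commute)
  qed
  have disj: "cball (q i) r \<inter> cball (q j) r = {}" if "i \<in> {1..m}" "j \<in> {1..m}" "i \<noteq> j" for i j
  proof (rule ccontr)
    assume "cball (q i) r \<inter> cball (q j) r \<noteq> {}"
    then obtain x where "dist (q i) x \<le> r" "dist (q j) x \<le> r" by auto
    hence "dist (q i) (q j) \<le> 2 * r" using dist_triangle[of "q i" "q j" x]
      by (simp add: dist_commute)
    moreover have "2 * r < dist (q i) (q j)"
      using that sep[of i j] sep[of j i] by (cases "i < j") (auto simp: dist_commute)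
    ultimately show False by simp
  qed
  show ?thesis using disj Csball qP unfolding r_def[symmetric] by auto
qed

end
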